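(* Consider the coupled opinion–network system described in the context with logistic weight dynamics, and assume there is a constant $c\ge 1/2$ with $\phi(r)>c$ for all $r\in[-2,2]$. Then the population reaches consensus (there exists $x^*$ with $x_i(t)\to x^*$ for all $i$) and, for all $i,j$, $w_{ij}(t)\to \mathbb{1}\{w_{ij}(0)>0\}$ as $t\to\infty$.
   Context: There are $N$ individuals with opinions $x_i(t)\in[-1,1]$ and edge weights $w_{ij}(t)\in[0,1]$. The degree is $k_i=\sum_{j=1}^N w_{ij}$. With interaction function $\phi:[-2,2]\to[0,1]$, the system with logistic weight dynamics is $\frac{dx_i}{dt}=\frac{1}{k_i}\sum_{j\neq i} w_{ij}\,\phi(x_j-x_i)(x_j-x_i)$, $\frac{dw_{ij}}{dt}=w_{ij}(1-w_{ij})\big(2\phi(x_j-x_i)-1\big)$ for $i\neq j$, and $w_{ii}\equiv 1$. Standing assumptions: $\phi$ is Lipschitz continuous, even, and $\phi(0)>0$; $x_1(0)\le\dots\le x_N(0)$; $w_{ii}=1$; the initial network $w(0)$ is strongly connected (for all $i,j$ there is a sequence $i=i_0,\dots,i_m=j$ with $w_{i_n i_{n+1}}(0)>0$). *)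

theory Defs
  imports "HOL-Analysis.Analysis"
begin

definition strongly_connected :: "nat \<Rightarrow> (nat \<Rightarrow> nat \<Rightarrow> real) \<Rightarrow> bool" where
  "strongly_connected N W \<longleftrightarrow>
     (\<forall>i<N. \<forall>j<N. \<exists>(p::nat \<Rightarrow> nat) m. p 0 = i \<and> p m = j \<and>
        (\<forall>n\<le>m. p n < N) \<and> (\<forall>n<m. W (p n) (p (Suc n)) > 0))"

definition degree :: "nat \<Rightarrow> (nat \<Rightarrow> nat \<Rightarrow> real) \<Rightarrow> nat \<Rightarrow> real" where
  "degree N W i = (\<Sum>j<N. W i j)"

definition is_logistic_solution ::
  "nat \<Rightarrow> (real \<Rightarrow> real) \<Rightarrow> (real \<Rightarrow> nat \<Rightarrow> real) \<Rightarrow> (real \<Rightarrow> nat \<Rightarrow> nat \<Rightarrow> real) \<Rightarrow> bool" where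
  "is_logistic_solution N \<phi> x w \<longleftrightarrow>
     (\<forall>t\<ge>0. \<forall>i<N. x t i \<in> {-1..1}) \<and>
     (\<forall>t\<ge>0. \<forall>i<N. \<forall>j<N. w t i j \<in> {0..1}) \<and>
     (\<forall>t\<ge>0. \<forall>i<N. w t i i = 1) \<and>
     (\<forall>t\<ge>0. \<forall>i<N.
        ((\<lambda>s. x s i) has_real_derivative
           (1 / degree N (w t) i) * (\<Sum>j\<in>{..<N} - {i}. w t i j * \<phi> (x t j - x t i) * (x t j - x t i)))
        (at t within {0..})) \<and>
     (\<forall>t\<ge>0. \<forall>i<N. \<forall>j<N. i \<noteq> j \<longrightarrow>
        ((\<lambda>s. w s i j) has_real_derivative
           w t i j * (1 - w t i j) * (2 * \<phi> (x t j - x t i) - 1))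
        (at t within {0..}))"

end

theory Submission
  imports Defs
begin

lemma mono_within0:
  fixes f f' :: "real \<Rightarrow> real"
  assumes "0 \<le> a" "a \<le> b"
    and d: "\<forall>\<tau>\<in>{a..b}. (f has_real_derivative f' \<tau>) (at \<tau> within {0..})"
    and nn: "\<forall>\<tau>\<in>{a..b}. f' \<tau> \<ge> 0"
  shows "f a \<le> f b"
proof (rule DERIV_nonneg_imp_increasing_open[OF assms(2)])
  fix y assume y: "a < y" "y < b"
  have "y \<in> interior {0::real..}" using y assms(1) by simp
  hence "at y within {0..} = at y" by (rule at_within_interior)
  thus "\<exists>z. (f has_real_derivative z) (at y) \<and> 0 \<le> z"
    using d nn y by (metis atLeastAtMost_iff less_imp_le)
next
  show "continuous_on {a..b} f"
    unfolding continuous_on_eq_continuous_within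
  proof
    fix \<tau> assume t: "\<tau> \<in> {a..b}"
    have "continuous (at \<tau> within {0..}) f" using d t DERIV_continuous by blast
    thus "continuous (at \<tau> within {a..b}) f"
      by (rule continuous_within_subset) (use assms(1) in auto)
  qed
qed

lemma gronwall0:
  fixes V V' :: "real \<Rightarrow> real"
  assumes "0 \<le> a" "a \<le> b"
    and d: "\<forall>\<tau>\<in>{a..b}. (V has_real_derivative V' \<tau>) (at \<tau> within {0..})"
    and le: "\<forall>\<tau>\<in>{a..b}. V' \<tau> \<le> K * V \<tau>"
    and "V a \<le> 0"
  shows "V b \<le> 0"
proof -
  let ?g = "\<lambda>\<tau>. - V \<tau> * exp (- K * \<tau>)"
  have "?g a \<le> ?g b"
  proof (rule mono_within0[OF assms(1,2), where f' = "\<lambda>\<tau>. - V' \<tau> * exp (- K * \<tau>) + - V \<tau> * (exp (- K * \<tau>) * (- K))"])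
    show "\<forall>\<tau>\<in>{a..b}. (?g has_real_derivative - V' \<tau> * exp (- K * \<tau>) + - V \<tau> * (exp (- K * \<tau>) * (- K))) (at \<tau> within {0..})"
      using d by (auto intro!: derivative_eq_intros)
    show "\<forall>\<tau>\<in>{a..b}. 0 \<le> - V' \<tau> * exp (- K * \<tau>) + - V \<tau> * (exp (- K * \<tau>) * (- K))"
    proof
      fix \<tau> assume "\<tau> \<in> {a..b}"
      hence "V' \<tau> - K * V \<tau> \<le> 0" using le by auto
      hence "(V' \<tau> - K * V \<tau>) * exp (- K * \<tau>) \<le> 0" by (simp add: mult_nonpos_nonneg)
      thus "0 \<le> - V' \<tau> * exp (- K * \<tau>) + - V \<tau> * (exp (- K * \<tau>) * (- K))"
        by (simp add: algebra_simps)
    qed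
  qed
  hence "- V b * exp (- K * b) \<ge> 0" using assms(5)
    by (smt (verit) exp_gt_zero mult_nonneg_nonneg)
  thus ?thesis by (simp add: mult_le_0_iff)
qed


lemma sqpos_deriv: "((\<lambda>z::real. (max z 0)^2) has_real_derivative 2 * max z 0) (at z)"
proof (cases "z > 0")
  case True
  have "((\<lambda>z::real. z^2) has_real_derivative 2 * z) (at z)"
    by (auto intro!: derivative_eq_intros)
  hence "((\<lambda>z::real. z^2) has_real_derivative 2 * max z 0) (at z)" using True by simp
  thus ?thesis
    by (rule has_field_derivative_transform_within_open[where S="{0<..}"]) (use True in auto)
next
  case False
  show ?thesis
  proof (cases "z < 0")
    case True
    have "((\<lambda>z::real. 0) has_real_derivative 2 * max z 0) (at z)" using True by simp
    thus ?thesis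
      by (rule has_field_derivative_transform_within_open[where S="{..<0}"]) (use True in auto)
  next
    case False
    with \<open>\<not> z > 0\<close> have z: "z = 0" by simp
    have "((\<lambda>y::real. ((max y 0)^2 - (max 0 0)^2) / (y - 0)) \<longlongrightarrow> 0) (at 0)"
    proof (rule tendsto_0_le[where f="\<lambda>y. y" and K=1])
      show "((\<lambda>y::real. y) \<longlongrightarrow> 0) (at 0)" by (rule tendsto_ident_at)
      show "\<forall>\<^sub>F y in at (0::real). norm (((max y 0)^2 - (max 0 0)^2) / (y - 0)) \<le> norm y * 1"
      proof (rule always_eventually, rule allI)
        fix y :: real
        show "norm (((max y 0)^2 - (max 0 0)^2) / (y - 0)) \<le> norm y * 1"
          by (cases "y > 0") (auto simp: power2_eq_square)
      qed
    qed
    thus ?thesis using z by (simp add: has_field_derivative_iff)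
  qed
qed


definition csys :: "nat \<Rightarrow> (real \<Rightarrow> nat \<Rightarrow> real) \<Rightarrow> (real \<Rightarrow> nat \<Rightarrow> nat \<Rightarrow> real) \<Rightarrow> bool" where
  "csys N y a \<longleftrightarrow>
    (\<forall>t\<ge>0. \<forall>i<N. ((\<lambda>s. y s i) has_real_derivative
        (\<Sum>j\<in>{..<N}-{i}. a t i j * (y t j - y t i))) (at t within {0..})) \<and>
    (\<forall>t\<ge>0. \<forall>i<N. \<forall>j<N. a t i j \<ge> 0) \<and>
    (\<forall>t\<ge>0. \<forall>i<N. (\<Sum>j\<in>{..<N}-{i}. a t i j) \<le> 1)"

lemma min_mono:
  assumes cs: "csys N y a" and t0: "0 \<le> t0" "t0 \<le> t"
    and lb: "\<forall>j<N. m0 \<le> y t0 j" and i: "i < N"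
  shows "m0 \<le> y t i"
proof -
  define u where "u \<tau> l = max (m0 - y \<tau> l) 0" for \<tau> l
  define V where "V \<tau> = (\<Sum>l<N. (u \<tau> l)^2)" for \<tau>
  define Y' where "Y' \<tau> l = (\<Sum>j\<in>{..<N}-{l}. a \<tau> l j * (y \<tau> j - y \<tau> l))" for \<tau> l
  define V' where "V' \<tau> = (\<Sum>l<N. 2 * u \<tau> l * (- Y' \<tau> l))" for \<tau>
  have u0: "u \<tau> l \<ge> 0" for \<tau> l unfolding u_def by simp
  have V0: "V \<tau> \<ge> 0" for \<tau> unfolding V_def by (simp add: sum_nonneg)
  have uV: "(u \<tau> l)^2 + (u \<tau> k)^2 \<le> V \<tau>" if "l < N" "k < N" "l \<noteq> k" for \<tau> l k
  proof -
    have "(\<Sum>q\<in>{l,k}. (u \<tau> q)^2) \<le> (\<Sum>q<N. (u \<tau> q)^2)"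
      by (rule sum_mono2) (use that in auto)
    thus ?thesis using that unfolding V_def by simp
  qed
  have uV1: "(u \<tau> l)^2 \<le> V \<tau>" if "l < N" for \<tau> l
  proof -
    have "(\<Sum>q\<in>{l}. (u \<tau> q)^2) \<le> (\<Sum>q<N. (u \<tau> q)^2)"
      by (rule sum_mono2) (use that in auto)
    thus ?thesis unfolding V_def by simp
  qed
  have dV: "\<forall>\<tau>\<in>{t0..t}. (V has_real_derivative V' \<tau>) (at \<tau> within {0..})"
  proof
    fix \<tau> assume "\<tau> \<in> {t0..t}"
    hence "\<tau> \<ge> 0" using t0 by auto
    have "((\<lambda>s. (u s l)^2) has_real_derivative 2 * u \<tau> l * (- Y' \<tau> l)) (at \<tau> within {0..})"
      if l: "l < N" for l
    proof -
      have dy: "((\<lambda>s. y s l) has_real_derivative Y' \<tau> l) (at \<tau> within {0..})"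
        using cs \<open>\<tau> \<ge> 0\<close> l unfolding csys_def Y'_def by blast
      have dm: "((\<lambda>s. m0 - y s l) has_real_derivative - Y' \<tau> l) (at \<tau> within {0..})"
        using dy by (auto intro!: derivative_eq_intros)
      have "((\<lambda>s. (max (m0 - y s l) 0)^2) has_real_derivative 2 * max (m0 - y \<tau> l) 0 * (- Y' \<tau> l)) (at \<tau> within {0..})"
        by (rule DERIV_chain2[OF sqpos_deriv dm])
      thus ?thesis unfolding u_def .
    qed
    thus "(V has_real_derivative V' \<tau>) (at \<tau> within {0..})"
      unfolding V_def[abs_def] V'_def by (intro DERIV_sum) auto
  qed
  have le: "\<forall>\<tau>\<in>{t0..t}. V' \<tau> \<le> (2 * real N) * V \<tau>"
  proof
    fix \<tau> assume "\<tau> \<in> {t0..t}"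
    hence \<tau>: "\<tau> \<ge> 0" using t0 by auto
    have trm: "2 * u \<tau> l * (- Y' \<tau> l) \<le> 2 * V \<tau>" if l: "l < N" for l
    proof -
      have each: "- u \<tau> l * (a \<tau> l j * (y \<tau> j - y \<tau> l)) \<le> a \<tau> l j * V \<tau>"
        if j: "j \<in> {..<N}-{l}" for j
      proof -
        have a0: "a \<tau> l j \<ge> 0" using cs \<tau> l j unfolding csys_def by auto
        show ?thesis
        proof (cases "m0 - y \<tau> l > 0")
          case False
          hence "u \<tau> l = 0" unfolding u_def by simp
          thus ?thesis using a0 V0 by simp
        next
          case True
          hence ul: "u \<tau> l = m0 - y \<tau> l" unfolding u_def by simp
          have "y \<tau> j - y \<tau> l \<ge> u \<tau> l - u \<tau> j" using ul unfolding u_def by simp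
          hence "- u \<tau> l * (y \<tau> j - y \<tau> l) \<le> - u \<tau> l * (u \<tau> l - u \<tau> j)"
            using u0[of \<tau> l] by (simp add: mult_left_mono)
          also have "\<dots> \<le> u \<tau> l * u \<tau> j"
          proof -
            have "- u \<tau> l * (u \<tau> l - u \<tau> j) = u \<tau> l * u \<tau> j - (u \<tau> l)^2"
              by (simp add: algebra_simps power2_eq_square)
            moreover have "(u \<tau> l)^2 \<ge> 0" by simp
            ultimately show ?thesis by linarith
          qed
          also have "\<dots> \<le> V \<tau>"
          proof -
            have "2 * (u \<tau> l * u \<tau> j) \<le> (u \<tau> l)^2 + (u \<tau> j)^2"
              using zero_le_power2[of "u \<tau> l - u \<tau> j"] unfolding power2_diff by linarith
            moreover have "(u \<tau> l)^2 + (u \<tau> j)^2 \<le> V \<tau>" using uV[of l j \<tau>] l j by auto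
            moreover have "u \<tau> l * u \<tau> j \<ge> 0" using u0 by simp
            ultimately show ?thesis by linarith
          qed
          finally have fin: "- u \<tau> l * (y \<tau> j - y \<tau> l) \<le> V \<tau>" .
          have "a \<tau> l j * (- u \<tau> l * (y \<tau> j - y \<tau> l)) \<le> a \<tau> l j * V \<tau>"
            by (rule mult_left_mono[OF fin a0])
          thus ?thesis by (simp add: algebra_simps)
        qed
      qed
      have "- u \<tau> l * Y' \<tau> l = (\<Sum>j\<in>{..<N}-{l}. - u \<tau> l * (a \<tau> l j * (y \<tau> j - y \<tau> l)))"
        unfolding Y'_def by (simp add: sum_distrib_left)
      also have "\<dots> \<le> (\<Sum>j\<in>{..<N}-{l}. a \<tau> l j * V \<tau>)" by (rule sum_mono) (rule each)
      also have "\<dots> = (\<Sum>j\<in>{..<N}-{l}. a \<tau> l j) * V \<tau>" by (simp add: sum_distrib_right)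
      also have "\<dots> \<le> 1 * V \<tau>"
        using cs \<tau> l V0[of \<tau>] unfolding csys_def by (intro mult_right_mono) auto
      finally have h: "- u \<tau> l * Y' \<tau> l \<le> V \<tau>" by simp
      have "2 * u \<tau> l * (- Y' \<tau> l) = 2 * (- u \<tau> l * Y' \<tau> l)" by simp
      with h show ?thesis by linarith
    qed
    have "V' \<tau> \<le> (\<Sum>l<N. 2 * V \<tau>)" unfolding V'_def by (rule sum_mono, rule trm, simp)
    thus "V' \<tau> \<le> (2 * real N) * V \<tau>" by simp
  qed
  have "V t0 \<le> 0" unfolding V_def u_def using lb by (simp add: sum_nonpos)
  hence "V t \<le> 0" by (intro gronwall0[OF t0 dV le]) auto
  hence "(u t i)^2 \<le> 0" using uV1[OF i, of t] by linarith
  hence "u t i = 0" by simp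
  thus ?thesis unfolding u_def by simp
qed


lemma comp1:
  fixes f f' :: "real \<Rightarrow> real"
  assumes "0 \<le> s" "s \<le> t"
    and d: "\<forall>\<tau>\<in>{s..t}. (f has_real_derivative f' \<tau>) (at \<tau> within {0..})"
    and lb: "\<forall>\<tau>\<in>{s..t}. f' \<tau> \<ge> A - f \<tau>"
  shows "f t \<ge> A + (f s - A) * exp (-(t - s))"
proof -
  let ?g = "\<lambda>\<tau>. (f \<tau> - A) * exp \<tau>"
  have "?g s \<le> ?g t"
  proof (rule mono_within0[OF assms(1,2), where f' = "\<lambda>\<tau>. f' \<tau> * exp \<tau> + (f \<tau> - A) * exp \<tau>"])
    show "\<forall>\<tau>\<in>{s..t}. (?g has_real_derivative f' \<tau> * exp \<tau> + (f \<tau> - A) * exp \<tau>) (at \<tau> within {0..})"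
      using d by (auto intro!: derivative_eq_intros)
    show "\<forall>\<tau>\<in>{s..t}. 0 \<le> f' \<tau> * exp \<tau> + (f \<tau> - A) * exp \<tau>"
    proof
      fix \<tau> assume "\<tau> \<in> {s..t}"
      hence "A - f \<tau> \<le> f' \<tau>" using lb by blast
      hence "f' \<tau> + (f \<tau> - A) \<ge> 0" by linarith
      hence "(f' \<tau> + (f \<tau> - A)) * exp \<tau> \<ge> 0" by simp
      thus "0 \<le> f' \<tau> * exp \<tau> + (f \<tau> - A) * exp \<tau>" by (simp add: algebra_simps)
    qed
  qed
  hence "(f s - A) * exp s * exp (- t) \<le> (f t - A) * exp t * exp (- t)"
    by (simp add: mult_right_mono)
  moreover have "exp s * exp (- t) = exp (-(t - s))" by (simp add: exp_add[symmetric])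
  moreover have "exp t * exp (- t) = 1" by (simp add: exp_add[symmetric])
  ultimately have "(f s - A) * exp (-(t - s)) \<le> (f t - A)"
    by (metis mult.assoc mult.right_neutral)
  thus ?thesis by simp
qed

lemma deriv_lb:
  assumes cs: "csys N y a" and \<tau>: "\<tau> \<ge> 0" and i: "i < N"
    and lb: "\<forall>l<N. m0 \<le> y \<tau> l"
  shows "(\<Sum>l\<in>{..<N}-{i}. a \<tau> i l * (y \<tau> l - y \<tau> i))
          \<ge> (\<Sum>l\<in>{..<N}-{i}. a \<tau> i l * (y \<tau> l - m0)) + (m0 - y \<tau> i)"
    and "(\<Sum>l\<in>{..<N}-{i}. a \<tau> i l * (y \<tau> l - m0)) \<ge> 0"
    and "i' < N \<Longrightarrow> i' \<noteq> i \<Longrightarrow> (\<Sum>l\<in>{..<N}-{i}. a \<tau> i l * (y \<tau> l - m0)) \<ge> a \<tau> i i' * (y \<tau> i' - m0)"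
proof -
  have a0: "\<And>l. l < N \<Longrightarrow> a \<tau> i l \<ge> 0" using cs \<tau> i unfolding csys_def by auto
  have s1: "(\<Sum>l\<in>{..<N}-{i}. a \<tau> i l) \<le> 1" using cs \<tau> i unfolding csys_def by auto
  have nn: "\<And>l. l \<in> {..<N}-{i} \<Longrightarrow> a \<tau> i l * (y \<tau> l - m0) \<ge> 0"
    using a0 lb by auto
  show "(\<Sum>l\<in>{..<N}-{i}. a \<tau> i l * (y \<tau> l - m0)) \<ge> 0" by (rule sum_nonneg) (rule nn)
  show "i' < N \<Longrightarrow> i' \<noteq> i \<Longrightarrow> (\<Sum>l\<in>{..<N}-{i}. a \<tau> i l * (y \<tau> l - m0)) \<ge> a \<tau> i i' * (y \<tau> i' - m0)"
    by (rule member_le_sum[where f="\<lambda>l. a \<tau> i l * (y \<tau> l - m0)"]) (use nn in auto)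
  have "(\<Sum>l\<in>{..<N}-{i}. a \<tau> i l * (y \<tau> l - y \<tau> i))
     = (\<Sum>l\<in>{..<N}-{i}. a \<tau> i l * (y \<tau> l - m0)) + (\<Sum>l\<in>{..<N}-{i}. a \<tau> i l) * (m0 - y \<tau> i)"
  proof -
    have "(\<Sum>l\<in>{..<N}-{i}. a \<tau> i l * (y \<tau> l - y \<tau> i))
      = (\<Sum>l\<in>{..<N}-{i}. a \<tau> i l * (y \<tau> l - m0) + a \<tau> i l * (m0 - y \<tau> i))"
      by (rule sum.cong) (auto simp: algebra_simps)
    also have "\<dots> = (\<Sum>l\<in>{..<N}-{i}. a \<tau> i l * (y \<tau> l - m0)) + (\<Sum>l\<in>{..<N}-{i}. a \<tau> i l * (m0 - y \<tau> i))"
      by (rule sum.distrib)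
    finally show ?thesis by (simp add: sum_distrib_right)
  qed
  moreover have "(\<Sum>l\<in>{..<N}-{i}. a \<tau> i l) * (m0 - y \<tau> i) \<ge> m0 - y \<tau> i"
  proof -
    have "(1 - (\<Sum>l\<in>{..<N}-{i}. a \<tau> i l)) * (m0 - y \<tau> i) \<le> 0"
      using s1 lb i by (intro mult_nonneg_nonpos) auto
    thus ?thesis by (simp add: algebra_simps)
  qed
  ultimately show "(\<Sum>l\<in>{..<N}-{i}. a \<tau> i l * (y \<tau> l - y \<tau> i))
          \<ge> (\<Sum>l\<in>{..<N}-{i}. a \<tau> i l * (y \<tau> l - m0)) + (m0 - y \<tau> i)" by linarith
qed


lemma path_rise:
  fixes T :: nat and p :: "nat \<Rightarrow> nat"
  assumes cs: "csys N y a" and al: "\<alpha> > 0"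
    and edge: "\<forall>t\<ge>0. \<forall>i<N. \<forall>j<N. i \<noteq> j \<and> W i j > 0 \<longrightarrow> a t i j \<ge> \<alpha>"
    and pN: "\<forall>n\<le>m. p n < N" and pW: "\<forall>n<m. W (p n) (p (Suc n)) > 0"
    and mT: "m \<le> T" and t0: "t0 \<ge> 0" and lb: "\<forall>l<N. m0 \<le> y t0 l"
  shows "\<forall>k\<le>m. \<forall>t\<in>{t0 + real k..t0 + real T}.
           y t (p (m - k)) - m0 \<ge> exp (- real T) * (min \<alpha> 1 * (1 - exp (-1))) ^ k * (y t0 (p m) - m0)"
proof -
  define \<gamma> where "\<gamma> = min \<alpha> 1 * (1 - exp (-1::real))"
  define D where "D = y t0 (p m) - m0"
  have e1: "exp (-1::real) < 1" by simp
  have g0: "\<gamma> \<ge> 0" unfolding \<gamma>_def using al e1 by simp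
  have g1: "\<gamma> \<le> 1" unfolding \<gamma>_def using al e1
    by (intro mult_le_one) auto
  have D0: "D \<ge> 0" unfolding D_def using lb pN by auto
  have mono: "\<And>t l. t \<ge> t0 \<Longrightarrow> l < N \<Longrightarrow> m0 \<le> y t l"
    using min_mono[OF cs t0 _ lb] by blast
  have der: "\<And>\<tau> l. \<tau> \<ge> 0 \<Longrightarrow> l < N \<Longrightarrow> ((\<lambda>s. y s l) has_real_derivative
        (\<Sum>j\<in>{..<N}-{l}. a \<tau> l j * (y \<tau> j - y \<tau> l))) (at \<tau> within {0..})"
    using cs unfolding csys_def by blast
  have "\<forall>t\<in>{t0 + real k..t0 + real T}. y t (p (m - k)) - m0 \<ge> exp (- real T) * \<gamma> ^ k * D"
    if "k \<le> m" for k
    using that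
  proof (induction k)
    case 0
    show ?case
    proof
      fix t assume t: "t \<in> {t0 + real 0..t0 + real T}"
      have j: "p m < N" using pN by auto
      have "y t (p m) \<ge> m0 + (y t0 (p m) - m0) * exp (-(t - t0))"
      proof (rule comp1[OF t0, where f' = "\<lambda>\<tau>. (\<Sum>j\<in>{..<N}-{p m}. a \<tau> (p m) j * (y \<tau> j - y \<tau> (p m)))"])
        show "t0 \<le> t" using t by auto
        show "\<forall>\<tau>\<in>{t0..t}. ((\<lambda>s. y s (p m)) has_real_derivative (\<Sum>j\<in>{..<N}-{p m}. a \<tau> (p m) j * (y \<tau> j - y \<tau> (p m)))) (at \<tau> within {0..})"
          using der j t0 by auto
        show "\<forall>\<tau>\<in>{t0..t}. m0 - y \<tau> (p m) \<le> (\<Sum>j\<in>{..<N}-{p m}. a \<tau> (p m) j * (y \<tau> j - y \<tau> (p m)))"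
        proof
          fix \<tau> assume "\<tau> \<in> {t0..t}"
          hence \<tau>: "\<tau> \<ge> 0" "\<forall>l<N. m0 \<le> y \<tau> l" using t0 mono by auto
          show "m0 - y \<tau> (p m) \<le> (\<Sum>j\<in>{..<N}-{p m}. a \<tau> (p m) j * (y \<tau> j - y \<tau> (p m)))"
            using deriv_lb(1,2)[OF cs \<tau>(1) j \<tau>(2)] by linarith
        qed
      qed
      moreover have "exp (-(t - t0)) \<ge> exp (- real T)" using t by simp
      ultimately have "y t (p m) - m0 \<ge> D * exp (- real T)"
        unfolding D_def using D0 D_def
        by (smt (verit, best) mult_left_mono)
      thus "y t (p (m - 0)) - m0 \<ge> exp (- real T) * \<gamma> ^ 0 * D" by (simp add: mult.commute)
    qed
  next
    case (Suc k)
    define n where "n = m - Suc k"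
    have mk: "m - k = Suc n" using Suc.prems unfolding n_def by simp
    have IH: "\<forall>t\<in>{t0 + real k..t0 + real T}. y t (p (Suc n)) - m0 \<ge> exp (- real T) * \<gamma> ^ k * D"
      using Suc mk by simp
    define X where "X = exp (- real T) * \<gamma> ^ k * D"
    have X0: "X \<ge> 0" unfolding X_def using g0 D0 by simp
    have i: "p n < N" and i': "p (Suc n) < N" using pN Suc.prems unfolding n_def by auto
    have Wn: "W (p n) (p (Suc n)) > 0" using pW Suc.prems unfolding n_def by auto
    show ?case
    proof
      fix t assume t: "t \<in> {t0 + real (Suc k)..t0 + real T}"
      have goal: "y t (p n) - m0 \<ge> \<gamma> * X"
      proof (cases "p n = p (Suc n)")
        case True
        have "y t (p n) - m0 \<ge> X" using IH t True unfolding X_def by auto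
        moreover have "\<gamma> * X \<le> X" by (rule mult_left_le_one_le[OF X0 g0 g1])
        ultimately show ?thesis by linarith
      next
        case False
        define s where "s = t0 + real k"
        have s0: "s \<ge> 0" "s \<ge> t0" unfolding s_def using t0 by auto
        have st: "s + 1 \<le> t" using t unfolding s_def by auto
        have "y t (p n) \<ge> (m0 + \<alpha> * X) + (y s (p n) - (m0 + \<alpha> * X)) * exp (-(t - s))"
        proof (rule comp1[OF s0(1), where f' = "\<lambda>\<tau>. (\<Sum>j\<in>{..<N}-{p n}. a \<tau> (p n) j * (y \<tau> j - y \<tau> (p n)))"])
          show "s \<le> t" using st by simp
          show "\<forall>\<tau>\<in>{s..t}. ((\<lambda>s. y s (p n)) has_real_derivative (\<Sum>j\<in>{..<N}-{p n}. a \<tau> (p n) j * (y \<tau> j - y \<tau> (p n)))) (at \<tau> within {0..})"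
            using der i s0 by auto
          show "\<forall>\<tau>\<in>{s..t}. m0 + \<alpha> * X - y \<tau> (p n) \<le> (\<Sum>j\<in>{..<N}-{p n}. a \<tau> (p n) j * (y \<tau> j - y \<tau> (p n)))"
          proof
            fix \<tau> assume \<tau>s: "\<tau> \<in> {s..t}"
            hence \<tau>: "\<tau> \<ge> 0" "\<forall>l<N. m0 \<le> y \<tau> l" using s0 mono by auto
            have ae: "a \<tau> (p n) (p (Suc n)) \<ge> \<alpha>" using edge \<tau>(1) i i' False Wn by auto
            have yx: "y \<tau> (p (Suc n)) - m0 \<ge> X"
              using IH \<tau>s t unfolding X_def s_def by auto
            have "a \<tau> (p n) (p (Suc n)) * (y \<tau> (p (Suc n)) - m0) \<ge> \<alpha> * X"
              using ae yx al X0 by (intro mult_mono) auto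
            thus "m0 + \<alpha> * X - y \<tau> (p n) \<le> (\<Sum>j\<in>{..<N}-{p n}. a \<tau> (p n) j * (y \<tau> j - y \<tau> (p n)))"
              using deriv_lb(1)[OF cs \<tau>(1) i \<tau>(2)] deriv_lb(3)[OF cs \<tau>(1) i \<tau>(2) i' not_sym[OF False]] by linarith
          qed
        qed
        moreover have "y s (p n) \<ge> m0" using mono s0 i by auto
        moreover have "exp (-(t - s)) \<le> exp (-1)" using st by simp
        moreover have "exp (-(t - s)) \<ge> 0" by simp
        moreover have aX: "\<alpha> * X \<ge> 0" using al X0 by simp
        ultimately have "y t (p n) \<ge> m0 + \<alpha> * X - \<alpha> * X * exp (-1)"
        proof -
          assume h: "y t (p n) \<ge> (m0 + \<alpha> * X) + (y s (p n) - (m0 + \<alpha> * X)) * exp (-(t - s))"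
            "y s (p n) \<ge> m0" "exp (-(t - s)) \<le> exp (-1)" "exp (-(t - s)) \<ge> 0"
          have "(y s (p n) - (m0 + \<alpha> * X)) * exp (-(t - s)) \<ge> (- (\<alpha> * X)) * exp (-(t - s))"
            using h(2,4) by (intro mult_right_mono) auto
          moreover have "(- (\<alpha> * X)) * exp (-(t - s)) \<ge> (- (\<alpha> * X)) * exp (-1)"
            using h(3) aX by (intro mult_left_mono_neg) auto
          moreover have "- (\<alpha> * X) * exp (-1) = - (\<alpha> * X * exp (-1))" by simp
          ultimately show ?thesis using h(1) by linarith
        qed
        hence "y t (p n) - m0 \<ge> \<alpha> * X * (1 - exp (-1))" by (simp add: algebra_simps)
        moreover have "\<gamma> * X \<le> \<alpha> * X * (1 - exp (-1))"
        proof -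
          have "min \<alpha> 1 * ((1 - exp (-1)) * X) \<le> \<alpha> * ((1 - exp (-1)) * X)"
            using X0 e1 by (intro mult_right_mono) auto
          thus ?thesis unfolding \<gamma>_def by (simp add: ac_simps)
        qed
        ultimately show ?thesis by linarith
      qed
      show "y t (p (m - Suc k)) - m0 \<ge> exp (- real T) * \<gamma> ^ Suc k * D"
        using goal unfolding n_def X_def by (simp add: algebra_simps)
    qed
  qed
  thus ?thesis unfolding \<gamma>_def D_def by blast
qed


lemma csys_neg: "csys N y a \<Longrightarrow> csys N (\<lambda>t i. - y t i) a"
  unfolding csys_def
proof (elim conjE, intro conjI allI impI)
  fix t :: real and i assume d: "\<forall>t\<ge>0. \<forall>i<N. ((\<lambda>s. y s i) has_real_derivative
        (\<Sum>j\<in>{..<N}-{i}. a t i j * (y t j - y t i))) (at t within {0..})"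
    and "0 \<le> t" "i < N"
  hence "((\<lambda>s. - y s i) has_real_derivative
        - (\<Sum>j\<in>{..<N}-{i}. a t i j * (y t j - y t i))) (at t within {0..})"
    by (auto intro!: derivative_eq_intros)
  moreover have "- (\<Sum>j\<in>{..<N}-{i}. a t i j * (y t j - y t i)) = (\<Sum>j\<in>{..<N}-{i}. a t i j * (- y t j - - y t i))"
    by (simp add: sum_negf[symmetric] algebra_simps)
  ultimately show "((\<lambda>s. - y s i) has_real_derivative
        (\<Sum>j\<in>{..<N}-{i}. a t i j * (- y t j - - y t i))) (at t within {0..})" by simp
qed auto

lemma max_mono:
  assumes cs: "csys N y a" and t0: "0 \<le> t0" "t0 \<le> t"
    and ub: "\<forall>j<N. y t0 j \<le> M0" and i: "i < N"
  shows "y t i \<le> M0"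
  using min_mono[OF csys_neg[OF cs] t0, of "- M0" i] ub i by auto

lemma contraction:
  assumes cs: "csys N y a" and al: "\<alpha> > 0"
    and edge: "\<forall>t\<ge>0. \<forall>i<N. \<forall>j<N. i \<noteq> j \<and> W i j > 0 \<longrightarrow> a t i j \<ge> \<alpha>"
    and sc: "strongly_connected N W" and N: "N > 0"
  shows "\<exists>T::nat. \<exists>\<beta>>0. \<beta> \<le> 1 \<and> (\<forall>t0\<ge>0.
     Max ((y (t0 + real T)) ` {..<N}) - Min ((y (t0 + real T)) ` {..<N})
       \<le> (1 - \<beta>) * (Max ((y t0) ` {..<N}) - Min ((y t0) ` {..<N})))"
proof -
  define P where "P i j m \<longleftrightarrow> (\<exists>p::nat\<Rightarrow>nat. p 0 = i \<and> p m = j \<and>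
        (\<forall>n\<le>m. p n < N) \<and> (\<forall>n<m. W (p n) (p (Suc n)) > 0))" for i j m
  define len where "len i j = (SOME m. P i j m)" for i j
  have Plen: "P i j (len i j)" if ij: "i < N" "j < N" for i j
  proof -
    obtain p m where "p 0 = i \<and> p m = j \<and> (\<forall>n\<le>m. p n < N) \<and> (\<forall>n<m. W (p n) (p (Suc n)) > 0)"
      using sc[unfolded strongly_connected_def, rule_format, OF ij] by blast
    hence "P i j m" unfolding P_def by blast
    thus ?thesis unfolding len_def by (rule someI)
  qed
  define T where "T = Max ((\<lambda>(i,j). len i j) ` ({..<N} \<times> {..<N}))"
  have lenT: "len i j \<le> T" if "i < N" "j < N" for i j
    unfolding T_def using that by (intro Max_ge) auto
  define \<gamma> where "\<gamma> = min \<alpha> 1 * (1 - exp (-1::real))"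
  define \<beta> where "\<beta> = exp (- real T) * \<gamma> ^ T"
  have e1: "exp (-1::real) < 1" by simp
  have g0: "\<gamma> > 0" unfolding \<gamma>_def using al e1 by simp
  have g1: "\<gamma> \<le> 1" unfolding \<gamma>_def using al e1
    by (intro mult_le_one) auto
  have b0: "\<beta> > 0" unfolding \<beta>_def using g0 by simp
  have b1: "\<beta> \<le> 1" unfolding \<beta>_def using g0 g1
    by (intro mult_le_one) (auto simp: power_le_one)
  have fin: "finite (y t ` {..<N})" "y t ` {..<N} \<noteq> {}" for t using N by auto
  have "\<forall>t0\<ge>0.
     Max ((y (t0 + real T)) ` {..<N}) - Min ((y (t0 + real T)) ` {..<N})
       \<le> (1 - \<beta>) * (Max ((y t0) ` {..<N}) - Min ((y t0) ` {..<N}))"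
  proof (intro allI impI)
    fix t0 :: real assume t0: "t0 \<ge> 0"
    define m0 where "m0 = Min ((y t0) ` {..<N})"
    define M0 where "M0 = Max ((y t0) ` {..<N})"
    obtain j where j: "j < N" "y t0 j = M0"
      using Max_in[OF fin[of t0]] unfolding M0_def by auto
    have lb: "\<forall>l<N. m0 \<le> y t0 l" unfolding m0_def using fin by auto
    have ub: "\<forall>l<N. y t0 l \<le> M0" unfolding M0_def using fin by auto
    have D0: "M0 - m0 \<ge> 0" using lb[rule_format, OF N] ub[rule_format, OF N] by linarith
    have up: "y (t0 + real T) i \<ge> m0 + \<beta> * (M0 - m0)" if i: "i < N" for i
    proof -
      obtain p where p: "p 0 = i" "p (len i j) = j" "\<forall>n\<le>len i j. p n < N"
          "\<forall>n<len i j. W (p n) (p (Suc n)) > 0"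
        using Plen[OF i j(1)] unfolding P_def by blast
      have "\<forall>k\<le>len i j. \<forall>t\<in>{t0 + real k..t0 + real T}.
           y t (p (len i j - k)) - m0 \<ge> exp (- real T) * \<gamma> ^ k * (y t0 (p (len i j)) - m0)"
        unfolding \<gamma>_def by (rule path_rise[OF cs al edge p(3) p(4) lenT[OF i j(1)] t0 lb])
      hence "y (t0 + real T) (p (len i j - len i j)) - m0 \<ge> exp (- real T) * \<gamma> ^ len i j * (y t0 (p (len i j)) - m0)"
        using lenT[OF i j(1)] by (metis atLeastAtMost_iff le_refl of_nat_le_iff add_le_cancel_left)
      hence "y (t0 + real T) i - m0 \<ge> exp (- real T) * \<gamma> ^ len i j * (M0 - m0)"
        using p(1,2) j(2) by simp
      moreover have "\<gamma> ^ T \<le> \<gamma> ^ len i j"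
        using lenT[OF i j(1)] g0 g1 by (intro power_decreasing) auto
      hence "\<beta> * (M0 - m0) \<le> exp (- real T) * \<gamma> ^ len i j * (M0 - m0)"
        unfolding \<beta>_def using D0 by (intro mult_right_mono) auto
      ultimately show ?thesis by linarith
    qed
    have "Min ((y (t0 + real T)) ` {..<N}) \<ge> m0 + \<beta> * (M0 - m0)"
      using up by (subst Min_ge_iff[OF fin]) auto
    moreover have "Max ((y (t0 + real T)) ` {..<N}) \<le> M0"
    proof (subst Max_le_iff[OF fin], intro ballI)
      fix v assume "v \<in> y (t0 + real T) ` {..<N}"
      then obtain i where "i < N" "v = y (t0 + real T) i" by auto
      thus "v \<le> M0" using max_mono[OF cs t0, of "t0 + real T" M0] ub by simp
    qed
    ultimately show "Max ((y (t0 + real T)) ` {..<N}) - Min ((y (t0 + real T)) ` {..<N})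
       \<le> (1 - \<beta>) * (Max ((y t0) ` {..<N}) - Min ((y t0) ` {..<N}))"
      unfolding m0_def[symmetric] M0_def[symmetric] by (simp add: algebra_simps)
  qed
  thus ?thesis using b0 b1 by blast
qed


lemma consensus:
  assumes cs: "csys N y a" and al: "\<alpha> > 0"
    and edge: "\<forall>t\<ge>0. \<forall>i<N. \<forall>j<N. i \<noteq> j \<and> W i j > 0 \<longrightarrow> a t i j \<ge> \<alpha>"
    and sc: "strongly_connected N W"
  shows "\<exists>xstar. \<forall>i<N. ((\<lambda>t. y t i) \<longlongrightarrow> xstar) at_top"
proof (cases "N = 0")
  case True thus ?thesis by simp
next
  case False
  hence N: "N > 0" by simp
  obtain T :: nat and \<beta> where b: "\<beta> > 0" "\<beta> \<le> 1" and contr: "\<forall>t0\<ge>0.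
     Max ((y (t0 + real T)) ` {..<N}) - Min ((y (t0 + real T)) ` {..<N})
       \<le> (1 - \<beta>) * (Max ((y t0) ` {..<N}) - Min ((y t0) ` {..<N}))"
    using contraction[OF cs al edge sc N] by blast
  define mn where "mn t = Min ((y t) ` {..<N})" for t
  define mx where "mx t = Max ((y t) ` {..<N})" for t
  have fin: "finite (y t ` {..<N})" "y t ` {..<N} \<noteq> {}" for t using N by auto
  have mn_le: "mn t \<le> y t i" "y t i \<le> mx t" if "i < N" for t i
    unfolding mn_def mx_def using fin that by auto
  have mn_mono: "mn t0 \<le> mn t" if "0 \<le> t0" "t0 \<le> t" for t0 t
  proof -
    have "\<forall>i<N. mn t0 \<le> y t i" using min_mono[OF cs that, of "mn t0"] mn_le by blast
    thus ?thesis unfolding mn_def using fin by auto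
  qed
  have mx_mono: "mx t \<le> mx t0" if "0 \<le> t0" "t0 \<le> t" for t0 t
  proof -
    have "\<forall>i<N. y t i \<le> mx t0" using max_mono[OF cs that, of "mx t0"] mn_le by blast
    thus ?thesis unfolding mx_def using fin by auto
  qed
  have mnmx: "mn t \<le> mx t" for t using mn_le(1)[OF N] mn_le(2)[OF N] by (rule order_trans)
  have cross: "mn s \<le> mx t" if "s \<ge> 0" "t \<ge> 0" for s t
  proof -
    have "mn s \<le> mn (max s t)" using that by (intro mn_mono) auto
    also have "\<dots> \<le> mx (max s t)" by (rule mnmx)
    also have "\<dots> \<le> mx t" using that by (intro mx_mono) auto
    finally show ?thesis .
  qed
  define xstar where "xstar = Sup (mn ` {0..})"
  have bdd: "bdd_above (mn ` {0..})" using cross[of _ 0] by (auto intro!: bdd_aboveI)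
  have xs1: "mn t \<le> xstar" if "t \<ge> 0" for t
    unfolding xstar_def using bdd that by (intro cSup_upper) auto
  have xs2: "xstar \<le> mx t" if "t \<ge> 0" for t
    unfolding xstar_def using cross that by (intro cSup_least) auto
  have Dk: "mx (real (k * T)) - mn (real (k * T)) \<le> (1 - \<beta>) ^ k * (mx 0 - mn 0)" for k
  proof (induction k)
    case 0 thus ?case by simp
  next
    case (Suc k)
    have "mx (real (Suc k * T)) - mn (real (Suc k * T)) \<le> (1 - \<beta>) * (mx (real (k * T)) - mn (real (k * T)))"
      using contr[rule_format, of "real (k * T)"] unfolding mx_def mn_def by (simp add: algebra_simps)
    also have "\<dots> \<le> (1 - \<beta>) * ((1 - \<beta>) ^ k * (mx 0 - mn 0))"
      using Suc.IH b by (intro mult_left_mono) auto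
    finally show ?case by simp
  qed
  show ?thesis
  proof (rule exI[of _ xstar], intro allI impI)
    fix i assume i: "i < N"
    show "((\<lambda>t. y t i) \<longlongrightarrow> xstar) at_top"
      unfolding tendsto_iff
    proof (intro allI impI)
      fix e :: real assume e: "e > 0"
      have "e / (mx 0 - mn 0 + 1) > 0" using e mnmx[of 0] by simp
      then obtain k where k: "(1 - \<beta>) ^ k < e / (mx 0 - mn 0 + 1)"
        using real_arch_pow_inv[of _ "1 - \<beta>"] b by auto
      have "(1 - \<beta>) ^ k * (mx 0 - mn 0) < e"
      proof -
        have "(1 - \<beta>) ^ k * (mx 0 - mn 0) \<le> (1 - \<beta>) ^ k * (mx 0 - mn 0 + 1)"
          using b by (intro mult_left_mono) auto
        also have "\<dots> < e" using k mnmx[of 0] by (simp add: field_simps)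
        finally show ?thesis .
      qed
      hence Dsmall: "mx (real (k * T)) - mn (real (k * T)) < e" using Dk[of k] by linarith
      show "\<forall>\<^sub>F t in at_top. dist (y t i) xstar < e"
        unfolding eventually_at_top_linorder
      proof (intro exI allI impI)
        fix t assume t: "t \<ge> real (k * T)"
        have "mn (real (k * T)) \<le> mn t" using t by (intro mn_mono) auto
        moreover have "mx t \<le> mx (real (k * T))" using t by (intro mx_mono) auto
        moreover have "mn (real (k * T)) \<le> xstar" "xstar \<le> mx (real (k * T))"
          using xs1 xs2 by auto
        ultimately show "dist (y t i) xstar < e"
          using mn_le[OF i, of t] Dsmall unfolding dist_real_def by linarith
      qed
    qed
  qed
qed


lemma weight_lemma:
  fixes W g :: "real \<Rightarrow> real"
  assumes d: "\<forall>t\<ge>0. (W has_real_derivative W t * (1 - W t) * g t) (at t within {0..})"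
    and r: "\<forall>t\<ge>0. W t \<in> {0..1}" and gl: "\<forall>t\<ge>0. g t \<ge> \<delta>" and dl: "\<delta> > 0"
    and gu: "\<forall>t\<ge>0. g t \<le> 1"
  shows "\<forall>t\<ge>0. W t \<ge> W 0"
    and "(W \<longlongrightarrow> (if W 0 > 0 then 1 else 0)) at_top"
proof -
  show mono: "\<forall>t\<ge>0. W t \<ge> W 0"
  proof (intro allI impI)
    fix t :: real assume t: "t \<ge> 0"
    show "W t \<ge> W 0"
    proof (rule mono_within0[OF order_refl t, where f' = "\<lambda>t. W t * (1 - W t) * g t"])
      show "\<forall>\<tau>\<in>{0..t}. (W has_real_derivative W \<tau> * (1 - W \<tau>) * g \<tau>) (at \<tau> within {0..})"
        using d by auto
      show "\<forall>\<tau>\<in>{0..t}. 0 \<le> W \<tau> * (1 - W \<tau>) * g \<tau>"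
        using r gl dl by (auto intro!: mult_nonneg_nonneg)
    qed
  qed
  show "(W \<longlongrightarrow> (if W 0 > 0 then 1 else 0)) at_top"
  proof (cases "W 0 > 0")
    case False
    hence W0: "W 0 \<le> 0" by simp
    have "W t \<le> 0" if t: "t \<ge> 0" for t
    proof (rule gronwall0[where K = 1 and V' = "\<lambda>t. W t * (1 - W t) * g t", OF order_refl t])
      show "W 0 \<le> 0" by (rule W0)
      show "\<forall>\<tau>\<in>{0..t}. (W has_real_derivative W \<tau> * (1 - W \<tau>) * g \<tau>) (at \<tau> within {0..})"
        using d by auto
      show "\<forall>\<tau>\<in>{0..t}. W \<tau> * (1 - W \<tau>) * g \<tau> \<le> 1 * W \<tau>"
      proof
        fix \<tau> assume "\<tau> \<in> {0..t}"
        hence h: "0 \<le> W \<tau>" "W \<tau> \<le> 1" "g \<tau> \<le> 1" "g \<tau> \<ge> 0" using r gu gl dl by force+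
        have "(1 - W \<tau>) * g \<tau> \<le> 1 * 1" using h by (intro mult_mono) auto
        hence "W \<tau> * ((1 - W \<tau>) * g \<tau>) \<le> W \<tau> * 1" using h by (intro mult_left_mono) auto
        thus "W \<tau> * (1 - W \<tau>) * g \<tau> \<le> 1 * W \<tau>" by (simp add: mult.assoc)
      qed
    qed
    hence "\<forall>t\<ge>0. W t = 0" using r by force
    hence "\<forall>\<^sub>F t in at_top. W t = 0" unfolding eventually_at_top_linorder by blast
    hence "(W \<longlongrightarrow> 0) at_top" by (rule tendsto_eventually)
    thus ?thesis using False by simp
  next
    case True
    define c where "c = W 0 * \<delta>"
    have c0: "c > 0" unfolding c_def using True dl by simp
    have ub: "1 - W t \<le> (1 - W 0) * exp (- c * t)" if t: "t \<ge> 0" for t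
    proof -
      let ?V = "\<lambda>\<tau>. (1 - W \<tau>) - (1 - W 0) * exp (- c * \<tau>)"
      have "?V t \<le> 0"
      proof (rule gronwall0[OF order_refl t, where K = "- c" and
            V' = "\<lambda>\<tau>. - (W \<tau> * (1 - W \<tau>) * g \<tau>) - (1 - W 0) * (exp (- c * \<tau>) * (- c))"])
        show "\<forall>\<tau>\<in>{0..t}. (?V has_real_derivative - (W \<tau> * (1 - W \<tau>) * g \<tau>) - (1 - W 0) * (exp (- c * \<tau>) * (- c))) (at \<tau> within {0..})"
          using d by (auto intro!: derivative_eq_intros)
        show "\<forall>\<tau>\<in>{0..t}. - (W \<tau> * (1 - W \<tau>) * g \<tau>) - (1 - W 0) * (exp (- c * \<tau>) * (- c)) \<le> - c * ?V \<tau>"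
        proof
          fix \<tau> assume "\<tau> \<in> {0..t}"
          hence h: "W \<tau> \<ge> W 0" "W \<tau> \<le> 1" "g \<tau> \<ge> \<delta>" using r gl mono by force+
          have "W 0 * (1 - W \<tau>) * \<delta> \<le> W \<tau> * (1 - W \<tau>) * g \<tau>"
            using h True dl by (intro mult_mono) auto
          thus "- (W \<tau> * (1 - W \<tau>) * g \<tau>) - (1 - W 0) * (exp (- c * \<tau>) * (- c)) \<le> - c * ?V \<tau>"
            unfolding c_def by (simp add: algebra_simps)
        qed
        show "?V 0 \<le> 0" by simp
      qed
      thus ?thesis by simp
    qed
    have lim: "((\<lambda>t. 1 - (1 - W 0) * exp (- c * t)) \<longlongrightarrow> 1 - (1 - W 0) * 0) at_top"
    proof (intro tendsto_intros)
      have "filterlim (\<lambda>t. c * t) at_top at_top"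
        using c0 by (intro filterlim_tendsto_pos_mult_at_top[OF tendsto_const] filterlim_ident) auto
      hence "filterlim (\<lambda>t. - (c * t)) at_bot at_top" by (simp add: filterlim_uminus_at_bot)
      thus "((\<lambda>t. exp (- c * t)) \<longlongrightarrow> 0) at_top"
        by (simp add: filterlim_compose[OF exp_at_bot])
    qed
    have "(W \<longlongrightarrow> 1) at_top"
    proof (rule tendsto_sandwich[OF _ _ _ tendsto_const])
      show "\<forall>\<^sub>F t in at_top. 1 - (1 - W 0) * exp (- c * t) \<le> W t"
        unfolding eventually_at_top_linorder using ub by (intro exI[of _ 0]) (auto simp: algebra_simps)
      show "\<forall>\<^sub>F t in at_top. W t \<le> 1"
        unfolding eventually_at_top_linorder using r by (intro exI[of _ 0]) auto
      show "((\<lambda>t. 1 - (1 - W 0) * exp (- c * t)) \<longlongrightarrow> 1) at_top" using lim by simp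
    qed
    thus ?thesis using True by simp
  qed
qed


theorem corollary2:
  fixes N :: nat and \<phi> :: "real \<Rightarrow> real"
    and x :: "real \<Rightarrow> nat \<Rightarrow> real" and w :: "real \<Rightarrow> nat \<Rightarrow> nat \<Rightarrow> real"
    and c :: real
  assumes phi_range: "\<forall>r\<in>{-2..2}. \<phi> r \<in> {0..1}"
    and phi_lip: "\<exists>L. L-lipschitz_on {-2..2} \<phi>"
    and phi_even: "\<forall>r\<in>{-2..2}. \<phi> (- r) = \<phi> r"
    and phi_0: "\<phi> 0 > 0"
    and sorted0: "\<forall>i j. i \<le> j \<and> j < N \<longrightarrow> x 0 i \<le> x 0 j"
    and conn: "strongly_connected N (w 0)"
    and sol: "is_logistic_solution N \<phi> x w"
    and c_ge: "c \<ge> 1/2"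
    and phi_gt: "\<forall>r\<in>{-2..2}. \<phi> r > c"
  shows "(\<exists>xstar. \<forall>i<N. ((\<lambda>t. x t i) \<longlongrightarrow> xstar) at_top) \<and>
         (\<forall>i<N. \<forall>j<N. ((\<lambda>t. w t i j) \<longlongrightarrow> (if w 0 i j > 0 then 1 else 0)) at_top)"
proof (cases "N = 0")
  case True thus ?thesis by simp
next
  case False
  hence N: "N > 0" by simp
  note S = sol[unfolded is_logistic_solution_def]
  note xr = S[THEN conjunct1] and wr = S[THEN conjunct2, THEN conjunct1]
    and wd = S[THEN conjunct2, THEN conjunct2, THEN conjunct1]
    and dx = S[THEN conjunct2, THEN conjunct2, THEN conjunct2, THEN conjunct1]
    and dw = S[THEN conjunct2, THEN conjunct2, THEN conjunct2, THEN conjunct2]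
  obtain L where "L-lipschitz_on {-2..2} \<phi>" using phi_lip by blast
  hence cont: "continuous_on {-2..2} \<phi>" by (rule lipschitz_on_continuous_on)
  obtain r0 where r0: "r0 \<in> {-2..2::real}" "\<forall>r\<in>{-2..2}. \<phi> r0 \<le> \<phi> r"
    using continuous_attains_inf[OF compact_Icc _ cont] by auto
  define \<delta> where "\<delta> = 2 * \<phi> r0 - 1"
  have \<delta>0: "\<delta> > 0" unfolding \<delta>_def using phi_gt r0(1) c_ge by force
  have diff: "x t j - x t i \<in> {-2..2}" if "t \<ge> 0" "i < N" "j < N" for t i j
  proof -
    have "x t j \<in> {-1..1}" "x t i \<in> {-1..1}" using xr that by auto
    thus ?thesis by auto
  qed
  have phir: "0 \<le> \<phi> (x t j - x t i)" "\<phi> (x t j - x t i) \<le> 1"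
     "\<phi> (x t j - x t i) \<ge> \<phi> r0" "\<phi> (x t j - x t i) > 1/2"
    if "t \<ge> 0" "i < N" "j < N" for t i j
  proof -
    have d: "x t j - x t i \<in> {-2..2}" by (rule diff[OF that])
    show "0 \<le> \<phi> (x t j - x t i)" "\<phi> (x t j - x t i) \<le> 1"
      using phi_range d by auto
    show "\<phi> (x t j - x t i) \<ge> \<phi> r0" using r0(2) d by blast
    show "\<phi> (x t j - x t i) > 1/2" using phi_gt d c_ge by fastforce
  qed
  have wl: "(\<forall>t\<ge>0. w t i j \<ge> w 0 i j) \<and> ((\<lambda>t. w t i j) \<longlongrightarrow> (if w 0 i j > 0 then 1 else 0)) at_top"
    if ij: "i < N" "j < N" "i \<noteq> j" for i j
  proof -
    have A: "\<forall>t\<ge>0. ((\<lambda>s. w s i j) has_real_derivative w t i j * (1 - w t i j) * (2 * \<phi> (x t j - x t i) - 1)) (at t within {0..})"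
      using dw ij by blast
    have B: "\<forall>t\<ge>0. w t i j \<in> {0..1}" using wr ij by blast
    have C: "\<forall>t\<ge>0. 2 * \<phi> (x t j - x t i) - 1 \<ge> \<delta>" unfolding \<delta>_def using phir(3) ij by force
    have D: "\<forall>t\<ge>0. 2 * \<phi> (x t j - x t i) - 1 \<le> 1" using phir(2) ij by force
    show ?thesis using weight_lemma[OF A B C \<delta>0 D] by blast
  qed
  have part2: "\<forall>i<N. \<forall>j<N. ((\<lambda>t. w t i j) \<longlongrightarrow> (if w 0 i j > 0 then 1 else 0)) at_top"
  proof (intro allI impI)
    fix i j assume ij: "i < N" "j < N"
    show "((\<lambda>t. w t i j) \<longlongrightarrow> (if w 0 i j > 0 then 1 else 0)) at_top"
    proof (cases "i = j")
      case False thus ?thesis using wl ij by blast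
    next
      case True
      have "\<forall>\<^sub>F t in at_top. w t i j = 1"
        unfolding eventually_at_top_linorder using wd ij True by (intro exI[of _ 0]) auto
      hence "((\<lambda>t. w t i j) \<longlongrightarrow> 1) at_top" by (rule tendsto_eventually)
      moreover have "w 0 i j = 1" using wd ij True by auto
      ultimately show ?thesis by simp
    qed
  qed
  define a where "a t i j = w t i j * \<phi> (x t j - x t i) / degree N (w t) i" for t i j
  have deg: "degree N (w t) i = 1 + (\<Sum>j\<in>{..<N}-{i}. w t i j)" "(\<Sum>j\<in>{..<N}-{i}. w t i j) \<ge> 0"
    "degree N (w t) i \<le> real N"
    if "t \<ge> 0" "i < N" for t i
  proof -
    show "degree N (w t) i = 1 + (\<Sum>j\<in>{..<N}-{i}. w t i j)"
      unfolding degree_def using sum.remove[of "{..<N}" i "w t i"] wd that by simp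
    show "(\<Sum>j\<in>{..<N}-{i}. w t i j) \<ge> 0" using wr that by (intro sum_nonneg) auto
    have "(\<Sum>j<N. w t i j) \<le> (\<Sum>j<N. 1)" using wr that by (intro sum_mono) auto
    thus "degree N (w t) i \<le> real N" unfolding degree_def by simp
  qed
  have cs: "csys N x a"
    unfolding csys_def
  proof (intro conjI allI impI)
    fix t :: real and i assume t: "0 \<le> t" and i: "i < N"
    have eq: "(1 / degree N (w t) i) * (\<Sum>j\<in>{..<N} - {i}. w t i j * \<phi> (x t j - x t i) * (x t j - x t i))
       = (\<Sum>j\<in>{..<N} - {i}. a t i j * (x t j - x t i))"
      unfolding sum_distrib_left a_def by (rule sum.cong) auto
    have d: "((\<lambda>s. x s i) has_real_derivative (1 / degree N (w t) i) * (\<Sum>j\<in>{..<N} - {i}. w t i j * \<phi> (x t j - x t i) * (x t j - x t i))) (at t within {0..})"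
      using dx t i by blast
    from d show "((\<lambda>s. x s i) has_real_derivative (\<Sum>j\<in>{..<N} - {i}. a t i j * (x t j - x t i))) (at t within {0..})"
      by (simp only: eq)
    show "(\<Sum>j\<in>{..<N} - {i}. a t i j) \<le> 1"
    proof -
      have "(\<Sum>j\<in>{..<N} - {i}. a t i j) \<le> (\<Sum>j\<in>{..<N} - {i}. w t i j / degree N (w t) i)"
      proof (rule sum_mono)
        fix j assume j: "j \<in> {..<N} - {i}"
        have "w t i j * \<phi> (x t j - x t i) \<le> w t i j"
          using wr phir(1,2)[OF t i] t i j by (intro mult_right_le_one_le) auto
        thus "a t i j \<le> w t i j / degree N (w t) i"
          unfolding a_def using deg(1,2)[OF t i] by (intro divide_right_mono) auto
      qed
      also have "\<dots> = (\<Sum>j\<in>{..<N} - {i}. w t i j) / degree N (w t) i"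
        by (simp add: sum_divide_distrib)
      also have "\<dots> \<le> 1" using deg(1,2)[OF t i] by simp
      finally show ?thesis .
    qed
  next
    fix t :: real and i j assume t: "0 \<le> t" and i: "i < N" and j: "j < N"
    show "0 \<le> a t i j" unfolding a_def using wr phir(1)[OF t i j] deg(1,2)[OF t i] t i j
      by (intro divide_nonneg_nonneg mult_nonneg_nonneg) auto
  qed
  define Es where "Es = (\<lambda>(i,j). w 0 i j) ` {(i,j). i < N \<and> j < N \<and> w 0 i j > 0}"
  define wmin where "wmin = Min (insert 1 Es)"
  have finE: "finite Es" unfolding Es_def
    by (rule finite_imageI, rule finite_subset[of _ "{..<N} \<times> {..<N}"]) auto
  have wmin0: "wmin > 0" unfolding wmin_def using finE
    by (subst Min_gr_iff) (auto simp: Es_def)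
  have wminle: "wmin \<le> w 0 i j" if "i < N" "j < N" "w 0 i j > 0" for i j
    unfolding wmin_def using finE that by (intro Min_le) (auto simp: Es_def)
  define \<alpha> where "\<alpha> = wmin / 2 / real N"
  have al: "\<alpha> > 0" unfolding \<alpha>_def using wmin0 N by simp
  have edge: "\<forall>t\<ge>0. \<forall>i<N. \<forall>j<N. i \<noteq> j \<and> w 0 i j > 0 \<longrightarrow> a t i j \<ge> \<alpha>"
  proof (intro allI impI, elim conjE)
    fix t :: real and i j assume t: "0 \<le> t" and i: "i < N" and j: "j < N" and ij: "i \<noteq> j" and wp: "w 0 i j > 0"
    have "w t i j \<ge> w 0 i j" using wl[OF i j ij] t by blast
    hence w1: "w t i j \<ge> wmin" using wminle[OF i j wp] by linarith
    have p1: "\<phi> (x t j - x t i) \<ge> 1/2" using phir(4)[OF t i j] by simp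
    have "wmin * (1/2) \<le> w t i j * \<phi> (x t j - x t i)"
      by (rule mult_mono[OF w1 p1]) (use w1 wmin0 in auto)
    hence "wmin / 2 \<le> w t i j * \<phi> (x t j - x t i)" by simp
    moreover have "0 < degree N (w t) i" using deg(1,2)[OF t i] by simp
    ultimately show "a t i j \<ge> \<alpha>" unfolding a_def \<alpha>_def
      using wmin0 deg(3)[OF t i] by (intro frac_le) auto
  qed
  have part1: "\<exists>xstar. \<forall>i<N. ((\<lambda>t. x t i) \<longlongrightarrow> xstar) at_top"
    by (rule consensus[OF cs al edge conn])
  show ?thesis using part1 part2 by blast
qed

end
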